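(* Let $a,b\in\mathbb{M}_2$ with $0\le a,b\le 1$ and $a,b\notin\{0,1\}$, such that $a$ is absolutely compatible with $b$ and $ab=ba$. Then: (a) If $a$ is strict, then there exist $\alpha,\beta\in(0,1)$ and a minimal (rank one) projection $p\in\mathbb{M}_2$ such that $b=p$ and $a=\alpha p+\beta(1-p)$. (b) If $a$ is not strict, then one of the following holds: (b.1) if $e(a)=0$, there exist $\alpha,\beta\in[0,1]$ with $\alpha+\beta>0$ and a minimal projection $p\in\mathbb{M}_2$ such that $a=p$ and $b=\alpha p+\beta(1-p)$; (b.2) if $s(a)\neq0$ and $e(a)\ne0$, there exist $\alpha,\beta\in[0,1]$ and a minimal projection $p\in\mathbb{M}_2$ such that either $a=p+\alpha(1-p)$ and $b=\beta p+(1-p)$ with $\alpha\ne0$, or $a=p+\alpha(1-p)$ and $b=\beta p$ with $\alpha,\beta\ne0$; (b.3) if $n(a)\ne0$ and $e(a)\neq0$, there exist $\alpha,\beta\in[0,1]$ and a minimal projection $p\in\mathbb{M}_2$ such that either $a=\alpha p$ and $b=p+\beta(1-p)$ with $\alpha\ne0$, or $a=\alpha p$ and $b=\beta(1-p)$ with $\alpha,\beta\ne0$.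
   Context: $\mathbb{M}_2$ is the algebra of $2\times2$ complex matrices. For $x$ in it, $|x|=(x^*x)^{1/2}$. Elements $0\le a,b\le 1$ are absolutely compatible if $|a-b|+|1-a-b|=1$. For positive $x$, $r(x)$ is the range projection. For $0\le a\le1$: $s(a)=1-r(1-a)$ (support projection), $e(a)=a-s(a)$, $n(a)=1-r(a)$; a non-zero $0\le a\le 1$ is strict if $s(a)=0=n(a)$. *)

theory Defs
  imports "HOL-Analysis.Analysis"
begin

type_synonym M2 = "complex^2^2"

definition madj :: "M2 \<Rightarrow> M2" where
  "madj x = (\<chi> i j. cnj (x $ j $ i))"

definition qform :: "M2 \<Rightarrow> complex^2 \<Rightarrow> complex" where
  "qform x v = (\<Sum>i\<in>UNIV. cnj (v $ i) * ((x *v v) $ i))"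

definition mpos :: "M2 \<Rightarrow> bool" where
  "mpos x \<longleftrightarrow> madj x = x \<and> (\<forall>v. qform x v \<in> \<real> \<and> 0 \<le> Re (qform x v))"

definition mle :: "M2 \<Rightarrow> M2 \<Rightarrow> bool" where
  "mle x y \<longleftrightarrow> mpos (y - x)"

definition mproj :: "M2 \<Rightarrow> bool" where
  "mproj p \<longleftrightarrow> p ** p = p \<and> madj p = p"

definition minproj :: "M2 \<Rightarrow> bool" where
  "minproj p \<longleftrightarrow> mproj p \<and> p \<noteq> 0 \<and> (\<forall>q. mproj q \<and> mle q p \<longrightarrow> q = 0 \<or> q = p)"

definition mabs :: "M2 \<Rightarrow> M2" where
  "mabs x = (THE r. mpos r \<and> r ** r = madj x ** x)"

definition abs_compatible :: "M2 \<Rightarrow> M2 \<Rightarrow> bool" where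
  "abs_compatible a b \<longleftrightarrow> mabs (a - b) + mabs (mat 1 - a - b) = mat 1"

definition rproj :: "M2 \<Rightarrow> M2" where
  "rproj x = (THE p. mproj p \<and> range ((*v) p) = range ((*v) x))"

definition sproj :: "M2 \<Rightarrow> M2" where
  "sproj a = mat 1 - rproj (mat 1 - a)"

definition eproj :: "M2 \<Rightarrow> M2" where
  "eproj a = a - sproj a"

definition nproj :: "M2 \<Rightarrow> M2" where
  "nproj a = mat 1 - rproj a"

definition strict :: "M2 \<Rightarrow> bool" where
  "strict a \<longleftrightarrow> a \<noteq> 0 \<and> mle 0 a \<and> mle a (mat 1) \<and> sproj a = 0 \<and> nproj a = 0"

end

theory Submission
  imports Defs
begin


lemma two_ne: "(1::2) \<noteq> 2" "(2::2) \<noteq> 1" by (simp_all add: eq_commute)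

lemma M2_eq: "(x::M2) = y \<longleftrightarrow> x$1$1 = y$1$1 \<and> x$1$2 = y$1$2 \<and> x$2$1 = y$2$1 \<and> x$2$2 = y$2$2"
  by (auto simp: vec_eq_iff forall_2)

lemma M2_eqI: "x$1$1 = y$1$1 \<Longrightarrow> x$1$2 = y$1$2 \<Longrightarrow> x$2$1 = y$2$1 \<Longrightarrow> x$2$2 = (y::M2)$2$2 \<Longrightarrow> x = y"
  using M2_eq by blast

lemma mm_ent[simp]: "((x::M2) ** y)$i$j = x$i$1*y$1$j + x$i$2*y$2$j"
  by (simp add: matrix_matrix_mult_def sum_2)

lemma madj_ent[simp]: "madj x $i$j = cnj (x$j$i)"
  by (simp add: madj_def)

lemma mat1_ent[simp]: "(mat 1 :: M2)$1$1 = 1" "(mat 1 :: M2)$2$2 = 1" "(mat 1 :: M2)$1$2 = 0" "(mat 1 :: M2)$2$1 = 0"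
  by (simp_all add: mat_def two_ne)

lemma mv_ent[simp]: "((x::M2) *v v)$i = x$i$1 * v$1 + x$i$2 * v$2"
  by (simp add: matrix_vector_mult_def sum_2)

lemma qform_ent: "qform x v = cnj (v$1) * ((x *v v)$1) + cnj (v$2) * ((x *v v)$2)"
  by (simp add: qform_def sum_2)

lemma scR_ent[simp]: "((c::real) *\<^sub>R (x::M2))$i$j = of_real c * x$i$j"
  unfolding vector_scaleR_component by (simp add: scaleR_conv_of_real)

lemma add_ent[simp]: "((x::M2) + y)$i$j = x$i$j + y$i$j" by simp
lemma diff_ent[simp]: "((x::M2) - y)$i$j = x$i$j - y$i$j" by simp

lemmas ent = M2_eq mm_ent madj_ent mat1_ent mv_ent scR_ent

lemma madj_madj[simp]: "madj (madj x) = x" by (simp add: ent)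
lemma madj_mult: "madj ((x::M2) ** (y::M2)) = madj y ** madj x" by (intro M2_eqI; simp add: algebra_simps)
lemma madj_add[simp]: "madj (x + y) = madj x + madj y" by (simp add: ent)
lemma madj_diff[simp]: "madj (x - y) = madj x - madj y" by (simp add: ent)
lemma madj_scaleR[simp]: "madj (c *\<^sub>R x) = c *\<^sub>R madj x" by (simp add: ent)
lemma madj_mat1[simp]: "madj (mat 1) = mat 1" by (simp add: ent)
lemma madj_0[simp]: "madj 0 = 0" by (simp add: ent)

lemma mm_scaleR_left[simp]: "(c *\<^sub>R (x::M2)) ** (y::M2) = c *\<^sub>R (x ** y)" by (intro M2_eqI; simp add: algebra_simps)
lemma mm_scaleR_right[simp]: "(x::M2) ** (c *\<^sub>R (y::M2)) = c *\<^sub>R (x ** y)" by (intro M2_eqI; simp add: algebra_simps)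
lemma mm_diff_left: "((x::M2) - y) ** (z::M2) = x ** z - y ** z" by (intro M2_eqI; simp add: algebra_simps)
lemma mm_diff_right: "(z::M2) ** ((x::M2) - y) = z ** x - z ** y" by (intro M2_eqI; simp add: algebra_simps)
lemma mm_add_left: "((x::M2) + y) ** (z::M2) = x ** z + y ** z" by (intro M2_eqI; simp add: algebra_simps)
lemma mm_add_right: "(z::M2) ** ((x::M2) + y) = z ** x + z ** y" by (intro M2_eqI; simp add: algebra_simps)
lemma mm_0[simp]: "(0::M2) ** (x::M2) = 0" "(x::M2) ** (0::M2) = 0" by (simp_all add: ent)




lemma cnj_eq_Im: "cnj z = z \<longleftrightarrow> Im z = 0" by (simp add: complex_eq_iff)

lemma herm_ent: assumes "madj x = x"
  shows "x$1$1 = of_real (Re (x$1$1))" "x$2$2 = of_real (Re (x$2$2))" "x$2$1 = cnj (x$1$2)"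
proof -
  from assms have "madj x $1$1 = x$1$1" "madj x $2$2 = x$2$2" "madj x $1$2 = x$1$2" by simp_all
  then have "cnj (x$1$1) = x$1$1" "cnj (x$2$2) = x$2$2" "cnj (x$2$1) = x$1$2" by simp_all
  then show "x$1$1 = of_real (Re (x$1$1))" "x$2$2 = of_real (Re (x$2$2))" "x$2$1 = cnj (x$1$2)"
    by (auto simp: complex_eq_iff)
qed

lemma qform_conj: "qform (madj c ** A ** c) v = qform A (c *v v)"
  by (simp add: qform_ent algebra_simps)

lemma mpos_conj: assumes "mpos A" shows "mpos (madj c ** A ** c)"
proof -
  have "madj (madj c ** A ** c) = madj c ** A ** c"
    using assms by (simp add: mpos_def madj_mult matrix_mul_assoc)
  then show ?thesis using assms by (simp add: mpos_def qform_conj)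
qed

lemma cz: "cnj z * z = of_real ((cmod z)^2)"
  using complex_norm_square[of z] by (simp only: mult.commute)

lemma mpos_mat1: "mpos (mat 1)"
proof -
  have "qform (mat 1) v = of_real (cmod (v$1) ^ 2 + cmod (v$2) ^ 2)" for v
  proof -
    have "qform (mat 1) v = cnj (v$1) * v$1 + cnj (v$2) * v$2" by (simp add: qform_ent)
    also have "\<dots> = of_real (cmod (v$1) ^ 2 + cmod (v$2) ^ 2)" by (simp only: cz of_real_add)
    finally show ?thesis .
  qed
  then show ?thesis by (simp add: mpos_def)
qed

lemma mpos_adjmult: "mpos (madj c ** c)"
  using mpos_conj[OF mpos_mat1, of c] by simp

lemma mpos_diag: assumes "mpos x" shows "0 \<le> Re (x$1$1)" "0 \<le> Re (x$2$2)"
proof -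
  have "qform x (vector [1,0]) = x$1$1" "qform x (vector [0,1]) = x$2$2"
    by (simp_all add: qform_ent)
  then show "0 \<le> Re (x$1$1)" "0 \<le> Re (x$2$2)" using assms unfolding mpos_def by metis+
qed

definition tr :: "M2 \<Rightarrow> complex" where "tr x = x$1$1 + x$2$2"
definition dt :: "M2 \<Rightarrow> complex" where "dt x = x$1$1 * x$2$2 - x$1$2 * x$2$1"

definition r1 :: "M2 \<Rightarrow> bool" where "r1 q \<longleftrightarrow> mproj q \<and> q \<noteq> 0 \<and> q \<noteq> mat 1"

lemma r1_tr_dt: assumes "r1 q" shows "tr q = 1" "dt q = 0"
proof -
  have pp: "q ** q = q" and h: "madj q = q" and n0: "q \<noteq> 0" and n1: "q \<noteq> mat 1"
    using assms by (auto simp: r1_def mproj_def)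
  define u where "u = q$1$1"
  define v where "v = q$2$2"
  define w where "w = q$1$2"
  have q21: "q$2$1 = cnj w" using herm_ent[OF h] w_def by simp
  have e1: "u*u + w * cnj w = u" using arg_cong[OF pp, of "\<lambda>x. x$1$1"] q21 by (simp add: u_def w_def)
  have e2: "u * w + w * v = w" using arg_cong[OF pp, of "\<lambda>x. x$1$2"] q21 by (simp add: u_def w_def v_def)
  have e3: "cnj w * w + v * v = v" using arg_cong[OF pp, of "\<lambda>x. x$2$2"] q21 by (simp add: v_def w_def)
  have "u + v = 1"
  proof (cases "w = 0")
    case True
    then have "u * u = u" "v * v = v" using e1 e3 by simp_all
    then have uu: "u = 0 \<or> u = 1" "v = 0 \<or> v = 1"
      by (metis mult_cancel_right2 mult_zero_left)+
    have "\<not> (u = 0 \<and> v = 0)" using n0 True q21 by (auto simp: M2_eq u_def v_def w_def)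
    moreover have "\<not> (u = 1 \<and> v = 1)" using n1 True q21 by (auto simp: M2_eq u_def v_def w_def)
    ultimately show ?thesis using uu by auto
  next
    case False
    have "w * (u + v - 1) = 0" using e2 by (simp add: algebra_simps)
    then show ?thesis using False by simp
  qed
  then show "tr q = 1" by (simp add: tr_def u_def v_def)
  have "dt q = u * v - w * cnj w" by (simp add: dt_def u_def v_def w_def q21)
  also have "\<dots> = u * (u + v - 1)" using e1 by (simp add: algebra_simps)
  finally show "dt q = 0" using \<open>u + v = 1\<close> by simp
qed




lemma aba_ident: "((A::M2) ** B ** A)$i$j = tr (A ** B) * A$i$j - dt A * (tr B * (mat 1::M2)$i$j - B$i$j)"
proof -
  have "i = 1 \<or> i = 2" "j = 1 \<or> j = 2" using exhaust_2 by auto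
  then show ?thesis by (elim disjE) (simp_all add: tr_def dt_def algebra_simps)
qed
lemma herm_cnj: assumes "madj x = x"
  shows "cnj (x$1$1) = x$1$1" "cnj (x$2$2) = x$2$2" "cnj (x$2$1) = x$1$2" "cnj (x$1$2) = x$2$1"
  using arg_cong[OF assms, of "\<lambda>y. y$1$1"] arg_cong[OF assms, of "\<lambda>y. y$2$2"]
    arg_cong[OF assms, of "\<lambda>y. y$1$2"] arg_cong[OF assms, of "\<lambda>y. y$2$1"] by simp_all

lemma tr_herm_real: assumes "madj q = q" "madj x = x" shows "tr (q ** x) = of_real (Re (tr (q ** x)))"
proof -
  have "cnj (tr (q ** x)) = tr (q ** x)"
    by (simp add: tr_def herm_cnj[OF assms(1)] herm_cnj[OF assms(2)] algebra_simps)
  then show ?thesis by (simp add: complex_eq_iff)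
qed

lemma cscale: "(c::real) *\<^sub>R (z::complex) = of_real c * z" by (simp add: scaleR_conv_of_real)

lemma r1_sandwich: assumes "r1 q" "madj x = x" shows "q ** x ** q = Re (tr (q ** x)) *\<^sub>R q"
proof -
  have h: "madj q = q" using assms by (simp add: r1_def mproj_def)
  define t where "t = Re (tr (q ** x))"
  have tt: "tr (q ** x) = of_real t" using tr_herm_real[OF h assms(2)] t_def by simp
  have "(q ** x ** q)$i$j = (t *\<^sub>R q)$i$j" for i j
    using aba_ident[of q x i j] r1_tr_dt(2)[OF assms(1)] tt by (simp add: cscale)
  then show ?thesis unfolding t_def[symmetric] by (simp add: M2_eq)
qed

lemma mproj_basic: assumes "mproj q"
  shows "q ** q = q" "q ** (mat 1 - q) = 0" "(mat 1 - q) ** q = 0" "(mat 1 - q) ** (mat 1 - q) = mat 1 - q"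
    "madj q = q"
proof -
  show qq: "q ** q = q" and "madj q = q" using assms by (simp_all add: mproj_def)
  show "q ** (mat 1 - q) = 0" by (simp only: mm_diff_right matrix_mul_rid qq diff_self)
  show "(mat 1 - q) ** q = 0" by (simp only: mm_diff_left matrix_mul_lid qq diff_self)
  show "(mat 1 - q) ** (mat 1 - q) = mat 1 - q"
    by (simp only: mm_diff_left mm_diff_right matrix_mul_lid matrix_mul_rid qq diff_self diff_zero)
qed

lemma r1_compl: assumes "r1 q" shows "r1 (mat 1 - q)"
proof -
  have m: "mproj q" "q \<noteq> 0" "q \<noteq> mat 1" using assms by (auto simp: r1_def)
  have "mproj (mat 1 - q)" using mproj_basic[OF m(1)] by (simp add: mproj_def)
  moreover have "mat 1 - q \<noteq> 0" using m(3) by simp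
  moreover have "mat 1 - q \<noteq> mat 1" using m(2) by simp
  ultimately show ?thesis by (simp add: r1_def)
qed

definition B :: "M2 \<Rightarrow> real \<Rightarrow> real \<Rightarrow> M2" where
  "B q s t = s *\<^sub>R q + t *\<^sub>R (mat 1 - q)"

lemma B_mult: assumes "mproj q" shows "B q s t ** B q s' t' = B q (s * s') (t * t')"
  using mproj_basic[OF assms] by (simp add: B_def mm_add_left mm_add_right mult.commute)

lemma B_madj: assumes "mproj q" shows "madj (B q s t) = B q s t"
  using mproj_basic[OF assms] by (simp add: B_def)

lemma B_add: "B q s t + B q s' t' = B q (s + s') (t + t')" by (simp add: B_def algebra_simps)
lemma B_diff: "B q s t - B q s' t' = B q (s - s') (t - t')" by (simp add: B_def algebra_simps)
lemma B_scale: "c *\<^sub>R B q s t = B q (c * s) (c * t)" by (simp add: B_def algebra_simps)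
lemma B_11: "B q 1 1 = mat 1" by (simp add: B_def)
lemma B_00: "B q 0 0 = 0" by (simp add: B_def)
lemma B_cc: "B q c c = c *\<^sub>R mat 1" by (simp add: B_def algebra_simps)
lemma B_10: "B q 1 0 = q" by (simp add: B_def)
lemma B_01: "B q 0 1 = mat 1 - q" by (simp add: B_def)
lemma B_swap: "B (mat 1 - q) s t = B q t s" by (simp add: B_def algebra_simps)

lemma B_inj: assumes "r1 q" shows "B q s t = B q s' t' \<longleftrightarrow> s = s' \<and> t = t'"
proof
  assume e: "B q s t = B q s' t'"
  have mp: "mproj q" and n0: "q \<noteq> 0" and n1: "q \<noteq> mat 1" using assms by (auto simp: r1_def)
  have "B q 1 0 ** B q s t = B q 1 0 ** B q s' t'" using e by simp
  then have "B q s 0 = B q s' 0" by (simp add: B_mult[OF mp])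
  then have "(s - s') *\<^sub>R q = 0" by (simp add: B_def algebra_simps)
  then have 1: "s = s'" using n0 by simp
  have "B q 0 1 ** B q s t = B q 0 1 ** B q s' t'" using e by simp
  then have "B q 0 t = B q 0 t'" by (simp add: B_mult[OF mp])
  then have "(t - t') *\<^sub>R (mat 1 - q) = 0" by (simp add: B_def algebra_simps)
  then have 2: "t = t'" using n1 by simp
  show "s = s' \<and> t = t'" using 1 2 by simp
qed simp




lemma commute_B: assumes "r1 q" "madj y = y" "y ** q = q ** y"
  shows "y = B q (Re (tr (q ** y))) (Re (tr ((mat 1 - q) ** y)))"
proof -
  have mp: "mproj q" using assms(1) by (simp add: r1_def)
  note qb = mproj_basic[OF mp]
  have 1: "q ** y ** q = q ** y"
    by (metis assms(3) matrix_mul_assoc qb(1))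
  have c2: "y ** (mat 1 - q) = (mat 1 - q) ** y" using assms(3) by (simp add: mm_diff_left mm_diff_right)
  have 2: "(mat 1 - q) ** y ** (mat 1 - q) = (mat 1 - q) ** y"
    by (metis c2 matrix_mul_assoc qb(4))
  have "y = q ** y + (mat 1 - q) ** y" by (simp add: mm_diff_left)
  also have "\<dots> = q ** y ** q + (mat 1 - q) ** y ** (mat 1 - q)" using 1 2 by simp
  also have "\<dots> = B q (Re (tr (q ** y))) (Re (tr ((mat 1 - q) ** y)))"
    unfolding r1_sandwich[OF assms(1,2)] r1_sandwich[OF r1_compl[OF assms(1)] assms(2)] B_def ..
  finally show ?thesis .
qed

lemma mpos_B: assumes "r1 q" "mpos (B q s t)" shows "0 \<le> s" "0 \<le> t"
proof -
  have *: "0 \<le> s" if "r1 q" "mpos (B q s t)" for q s t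
  proof -
    have mp: "mproj q" using that(1) by (simp add: r1_def)
    have "madj q ** B q s t ** q = B q 1 0 ** B q s t ** B q 1 0"
      using mproj_basic(5)[OF mp] by (simp only: B_10)
    also have "\<dots> = B q s 0" by (simp only: B_mult[OF mp]) simp
    also have "\<dots> = s *\<^sub>R q" by (simp add: B_def)
    finally have "mpos (s *\<^sub>R q)" using mpos_conj[OF that(2), of q] by simp
    from mpos_diag[OF this] have "0 \<le> Re (of_real s * q$1$1) + Re (of_real s * q$2$2)" by simp
    also have "\<dots> = s * Re (tr q)" by (simp add: tr_def algebra_simps)
    also have "\<dots> = s" using r1_tr_dt(1)[OF that(1)] by simp
    finally show ?thesis .
  qed
  show "0 \<le> s" using * assms by blast
  show "0 \<le> t" using *[OF r1_compl[OF assms(1)], of t s] assms(2) by (simp add: B_swap)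
qed

lemma mpos_B_nonneg: assumes "mproj q" "0 \<le> s" "0 \<le> t" shows "mpos (B q s t)"
proof -
  let ?c = "B q (sqrt s) (sqrt t)"
  have "madj ?c ** ?c = B q s t" using assms by (simp add: B_madj B_mult)
  then show ?thesis using mpos_adjmult[of ?c] by simp
qed




lemma tr_mat1: "tr (mat 1) = 2" by (simp add: tr_def)
lemma tr_0: "tr 0 = 0" by (simp add: tr_def)

lemma spectral_or_scalar: assumes "madj h = h"
  shows "(\<exists>c. h = c *\<^sub>R mat 1) \<or> (\<exists>q c d. r1 q \<and> q = c *\<^sub>R h + d *\<^sub>R mat 1)"
proof -
  note hc = herm_ent[OF assms]
  define p where "p = Re (h$1$1)"
  define s where "s = Re (h$2$2)"
  define w where "w = h$1$2"
  have h11: "h$1$1 = of_real p" and h22: "h$2$2 = of_real s" and h21: "h$2$1 = cnj w"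
    using hc by (simp_all add: p_def s_def w_def)
  define e where "e = (p - s) / 2"
  define m where "m = (p + s) / 2"
  define r where "r = sqrt (e^2 + (cmod w)^2)"
  have r0: "0 \<le> r" by (simp add: r_def)
  have rr: "r^2 = e^2 + (cmod w)^2" by (simp add: r_def)
  show ?thesis
  proof (cases "r = 0")
    case True
    then have "e^2 + (cmod w)^2 = 0" using rr by simp
    then have "e = 0" "w = 0" by (simp_all add: add_nonneg_eq_0_iff)
    then have "h = p *\<^sub>R mat 1"
      by (intro M2_eqI) (simp_all add: h11 h22 h21 e_def w_def[symmetric] cscale)
    then show ?thesis by blast
  next
    case False
    then have rpos: "r > 0" using r0 by simp
    define c where "c = 1 / (2 * r)"
    define d where "d = 1/2 - m / (2 * r)"
    define q where "q = c *\<^sub>R h + d *\<^sub>R mat 1"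
    define X where "X = (r + e) / (2 * r)"
    define Y where "Y = (r - e) / (2 * r)"
    have "c * p + d = X" using rpos by (simp add: X_def c_def d_def m_def e_def field_simps)
    moreover have "q$1$1 = of_real c * of_real p + of_real d" by (simp add: q_def h11 cscale)
    ultimately have q11: "q$1$1 = of_real X" by (metis of_real_add of_real_mult)
    have "c * s + d = Y" using rpos by (simp add: Y_def c_def d_def m_def e_def field_simps)
    moreover have "q$2$2 = of_real c * of_real s + of_real d" by (simp add: q_def h22 cscale)
    ultimately have q22: "q$2$2 = of_real Y" by (metis of_real_add of_real_mult)
    have q12: "q$1$2 = of_real c * w" by (simp add: q_def w_def cscale)
    have q21: "q$2$1 = of_real c * cnj w" by (simp add: q_def h21 cscale)
    have wc: "w * cnj w = of_real (r^2 - e^2)" using rr complex_norm_square[of w] by simp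
    have XY: "X + Y = 1" using rpos by (simp add: X_def Y_def field_simps)
    have cc: "c * c * (r^2 - e^2) = X * Y"
    proof -
      have "X * Y = ((r + e) * (r - e)) / ((2 * r) * (2 * r))" by (simp add: X_def Y_def)
      also have "\<dots> = (r^2 - e^2) / (4 * r^2)" by (simp add: power2_eq_square algebra_simps)
      also have "\<dots> = c * c * (r^2 - e^2)" by (simp add: c_def power2_eq_square)
      finally show ?thesis by simp
    qed
    have XX: "X * X + X * Y = X"
    proof -
      have "X * X + X * Y = X * (X + Y)" by (simp only: distrib_left)
      then show ?thesis using XY by simp
    qed
    have YY: "Y * Y + X * Y = Y"
    proof -
      have "Y * Y + X * Y = Y * (X + Y)" by (simp only: distrib_left mult.commute add.commute)
      then show ?thesis using XY by simp
    qed
    have k: "of_real c * w * (of_real c * cnj w) = (of_real (X * Y) :: complex)"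
    proof -
      have "of_real c * w * (of_real c * cnj w) = of_real (c * c) * (w * cnj w)" by (simp add: algebra_simps)
      also have "\<dots> = of_real (c * c * (r^2 - e^2))" by (simp add: wc)
      finally show ?thesis using cc by simp
    qed
    have k2: "of_real c * cnj w * (of_real c * w) = (of_real (X * Y) :: complex)"
      using k by (simp add: algebra_simps)
    have qq: "q ** q = q"
    proof (intro M2_eqI)
      have "of_real X * of_real X + of_real (X * Y) = (of_real X :: complex)"
        using arg_cong[OF XX, of "of_real :: real \<Rightarrow> complex"] by simp
      then show "(q ** q)$1$1 = q$1$1" unfolding mm_ent q11 q12 q21 k .
      have "of_real (X * Y) + of_real Y * of_real Y = (of_real Y :: complex)"
        using arg_cong[OF YY, of "of_real :: real \<Rightarrow> complex"] by (simp add: add.commute)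
      then show "(q ** q)$2$2 = q$2$2" unfolding mm_ent q22 q12 q21 k2 .
      have "of_real X * (of_real c * w) + of_real c * w * of_real Y = of_real c * w * of_real (X + Y)"
        by (simp add: algebra_simps)
      then show "(q ** q)$1$2 = q$1$2" unfolding mm_ent q11 q22 q12 XY by simp
      have "of_real c * cnj w * of_real X + of_real Y * (of_real c * cnj w) = of_real c * cnj w * of_real (X + Y)"
        by (simp add: algebra_simps)
      then show "(q ** q)$2$1 = q$2$1" unfolding mm_ent q11 q22 q21 XY by simp
    qed
    have qa: "madj q = q" using assms by (simp add: q_def)
    have tq: "tr q = 1" using arg_cong[OF XY, of "of_real :: real \<Rightarrow> complex"] by (simp add: tr_def q11 q22)
    have "q \<noteq> 0" using tq tr_0 by auto
    moreover have "q \<noteq> mat 1" using tq tr_mat1 by auto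
    ultimately have "r1 q" using qq qa by (simp add: r1_def mproj_def)
    then show ?thesis using q_def by blast
  qed
qed




definition q0 :: M2 where "q0 = (\<chi> i j. if i = 1 \<and> j = 1 then 1 else 0)"

lemma q0_ent[simp]: "q0$1$1 = 1" "q0$1$2 = 0" "q0$2$1 = 0" "q0$2$2 = 0"
  by (simp_all add: q0_def two_ne)

lemma r1_q0: "r1 q0"
proof -
  have "q0 ** q0 = q0" "madj q0 = q0" by (simp_all add: M2_eq)
  moreover have "q0 \<noteq> 0" by (auto simp: M2_eq)
  moreover have "q0 \<noteq> mat 1" by (auto simp: M2_eq)
  ultimately show ?thesis by (simp add: r1_def mproj_def)
qed

lemma comm_lin: assumes "(y::M2) ** (h::M2) = h ** y"
  shows "y ** (c *\<^sub>R h + d *\<^sub>R mat 1) = (c *\<^sub>R h + d *\<^sub>R mat 1) ** y"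
  using assms by (simp add: mm_add_left mm_add_right)

lemma comm_B: assumes "r1 q" "madj y = y" "y ** q = q ** y" shows "\<exists>s t. y = B q s t"
  using commute_B[OF assms] by blast

lemma joint: assumes "madj a = a" "madj b = b" "a ** b = b ** a"
  shows "\<exists>q \<alpha> \<beta> \<gamma> \<delta>. r1 q \<and> a = B q \<alpha> \<beta> \<and> b = B q \<gamma> \<delta>"
proof (cases "\<exists>c. a = c *\<^sub>R mat 1")
  case True
  then obtain c where ac: "a = c *\<^sub>R mat 1" by blast
  show ?thesis
  proof (cases "\<exists>c. b = c *\<^sub>R mat 1")
    case True
    then obtain c' where bc: "b = c' *\<^sub>R mat 1" by blast
    show ?thesis using r1_q0 ac bc by (metis B_cc)
  next
    case False
    then obtain q c1 d1 where q: "r1 q" "q = c1 *\<^sub>R b + d1 *\<^sub>R mat 1"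
      using spectral_or_scalar[OF assms(2)] by blast
    have "b ** q = q ** b" using q(2) comm_lin[of b b c1 d1] by simp
    then obtain s t where "b = B q s t" using comm_B[OF q(1) assms(2)] by blast
    then show ?thesis using q(1) ac by (metis B_cc)
  qed
next
  case False
  then obtain q c1 d1 where q: "r1 q" "q = c1 *\<^sub>R a + d1 *\<^sub>R mat 1"
    using spectral_or_scalar[OF assms(1)] by blast
  have "a ** q = q ** a" using q(2) comm_lin[of a a c1 d1] by simp
  then obtain s t where 1: "a = B q s t" using comm_B[OF q(1) assms(1)] by blast
  have "b ** q = q ** b" using q(2) comm_lin[of b a c1 d1] assms(3) by simp
  then obtain s' t' where 2: "b = B q s' t'" using comm_B[OF q(1) assms(2)] by blast
  show ?thesis using 1 2 q(1) by blast
qed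

lemma spectral: assumes "madj h = h" shows "\<exists>q s t. r1 q \<and> h = B q s t"
  using joint[OF assms assms] by blast

lemma mproj_range_unique: assumes "mproj p1" "mproj p2" "range ((*v) p1) = range ((*v) p2)"
  shows "p1 = p2"
proof -
  have key: "p ** p' = p'" if "mproj p" "mproj p'" "range ((*v) p) = range ((*v) p')" for p p'
  proof -
    have "(p ** p') *v v = p' *v v" for v
    proof -
      have "p' *v v \<in> range ((*v) p)" using that(3) by auto
      then obtain u where u: "p' *v v = p *v u" by auto
      have "(p ** p') *v v = p *v (p *v u)" by (simp add: u flip: matrix_vector_mul_assoc)
      also have "\<dots> = p *v u" using that(1) by (simp add: mproj_def matrix_vector_mul_assoc)
      finally show ?thesis using u by simp
    qed
    then show ?thesis by (simp add: matrix_eq)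
  qed
  have 1: "p1 ** p2 = p2" using key assms by blast
  have 2: "p2 ** p1 = p1" using key assms by metis
  have "p1 = madj p1" using assms(1) by (simp add: mproj_def)
  also have "\<dots> = madj (p2 ** p1)" using 2 by simp
  also have "\<dots> = p1 ** p2" using assms by (simp add: madj_mult mproj_def)
  also have "\<dots> = p2" by (rule 1)
  finally show ?thesis .
qed

lemma range_eqI: assumes "x = p ** x" "p = x ** y" shows "range ((*v) x) = range ((*v) p)"
proof
  show "range ((*v) x) \<subseteq> range ((*v) p)"
  proof
    fix z assume "z \<in> range ((*v) x)"
    then obtain v where "z = x *v v" by auto
    then have "z = p *v (x *v v)" using assms(1) by (metis matrix_vector_mul_assoc)
    then show "z \<in> range ((*v) p)" by auto
  qed
  show "range ((*v) p) \<subseteq> range ((*v) x)"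
  proof
    fix z assume "z \<in> range ((*v) p)"
    then obtain v where "z = p *v v" by auto
    then have "z = x *v (y *v v)" using assms(2) by (metis matrix_vector_mul_assoc)
    then show "z \<in> range ((*v) x)" by auto
  qed
qed

lemma rproj_B: assumes "r1 q"
  shows "rproj (B q s t) = B q (if s = 0 then 0 else 1) (if t = 0 then 0 else 1)"
proof -
  have mp: "mproj q" using assms by (simp add: r1_def)
  let ?P = "B q (if s = 0 then 0 else 1) (if t = 0 then 0 else 1)"
  let ?y = "B q (if s = 0 then 0 else 1/s) (if t = 0 then 0 else 1/t)"
  have pP: "mproj ?P" by (simp add: mproj_def B_mult[OF mp] B_madj[OF mp])
  have "B q s t = ?P ** B q s t" by (simp add: B_mult[OF mp])
  moreover have "?P = B q s t ** ?y" by (simp add: B_mult[OF mp])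
  ultimately have rr: "range ((*v) (B q s t)) = range ((*v) ?P)" by (rule range_eqI)
  then have "mproj ?P \<and> range ((*v) ?P) = range ((*v) (B q s t))" using pP by simp
  then show ?thesis unfolding rproj_def
  proof (rule the_equality)
    fix p assume "mproj p \<and> range ((*v) p) = range ((*v) (B q s t))"
    then show "p = ?P" using mproj_range_unique[of p ?P] pP rr by simp
  qed
qed




lemma sq_abs: assumes "0 \<le> (u::real)" "u * u = s * s" shows "u = \<bar>s\<bar>"
  using real_sqrt_abs2[of s] real_sqrt_abs2[of u] assms by simp

lemma mabs_B: assumes "r1 q" shows "mabs (B q s t) = B q \<bar>s\<bar> \<bar>t\<bar>"
proof -
  have mp: "mproj q" using assms by (simp add: r1_def)
  have sq: "madj (B q s t) ** B q s t = B q (s * s) (t * t)" by (simp add: B_madj[OF mp] B_mult[OF mp])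
  show ?thesis unfolding mabs_def
  proof (rule the_equality)
    show "mpos (B q \<bar>s\<bar> \<bar>t\<bar>) \<and> B q \<bar>s\<bar> \<bar>t\<bar> ** B q \<bar>s\<bar> \<bar>t\<bar> = madj (B q s t) ** B q s t"
      using mpos_B_nonneg[OF mp] by (simp add: sq B_mult[OF mp])
  next
    fix r assume "mpos r \<and> r ** r = madj (B q s t) ** B q s t"
    then have rp: "mpos r" and rr: "r ** r = B q (s * s) (t * t)" using sq by auto
    have hr: "madj r = r" using rp by (simp add: mpos_def)
    show "r = B q \<bar>s\<bar> \<bar>t\<bar>"
    proof (cases "s * s = t * t")
      case False
      define c where "c = 1 / (s * s - t * t)"
      have "r ** r - (t * t) *\<^sub>R mat 1 = B q (s * s) (t * t) - B q (t * t) (t * t)"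
        by (simp only: rr B_cc)
      then have "r ** r - (t * t) *\<^sub>R mat 1 = B q (s * s - t * t) 0" by (simp add: B_diff)
      then have qe: "q = c *\<^sub>R (r ** r) + (- c * (t * t)) *\<^sub>R mat 1"
        using False by (simp add: c_def B_scale algebra_simps) (simp add: B_def)
      have "r ** (r ** r) = (r ** r) ** r" by (simp add: matrix_mul_assoc)
      then have "r ** q = q ** r" using comm_lin[of r "r ** r" c "- c * (t * t)"] qe by simp
      then obtain u v where ruv: "r = B q u v" using comm_B[OF assms hr] by blast
      have uv: "0 \<le> u" "0 \<le> v" using mpos_B[OF assms] rp ruv by auto
      have "B q (u * u) (v * v) = B q (s * s) (t * t)" using rr ruv by (simp add: B_mult[OF mp])
      then have "u * u = s * s" "v * v = t * t" using B_inj[OF assms] by auto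
      then show ?thesis using ruv uv sq_abs by simp
    next
      case True
      obtain q' u v where q': "r1 q'" "r = B q' u v" using spectral[OF hr] by blast
      have mp': "mproj q'" using q' by (simp add: r1_def)
      have uv: "0 \<le> u" "0 \<le> v" using mpos_B[OF q'(1)] rp q' by auto
      have "B q' (u * u) (v * v) = r ** r" using q' by (simp add: B_mult[OF mp'])
      also have "\<dots> = B q' (s * s) (s * s)" using rr True by (simp add: B_cc)
      finally have "u * u = s * s" "v * v = s * s" using B_inj[OF q'(1)] by auto
      then have "u = \<bar>s\<bar>" "v = \<bar>s\<bar>" using uv sq_abs by auto
      moreover have "\<bar>t\<bar> = \<bar>s\<bar>" using True sq_abs[of "\<bar>t\<bar>" s] by simp
      ultimately show ?thesis using q' by (simp add: B_cc)
    qed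
  qed
qed

lemma adj_zero: assumes "madj z ** z = 0" shows "z = 0"
proof -
  have "(madj z ** z)$1$1 = of_real ((cmod (z$1$1))^2 + (cmod (z$2$1))^2)"
    by (simp only: mm_ent madj_ent cz of_real_add)
  moreover have "(madj z ** z)$1$1 = 0" using assms by simp
  ultimately have "of_real ((cmod (z$1$1))^2 + (cmod (z$2$1))^2) = (0::complex)" by metis
  then have a: "(cmod (z$1$1))^2 + (cmod (z$2$1))^2 = 0" by (simp only: of_real_eq_0_iff)
  have "(madj z ** z)$2$2 = of_real ((cmod (z$1$2))^2 + (cmod (z$2$2))^2)"
    by (simp only: mm_ent madj_ent cz of_real_add)
  moreover have "(madj z ** z)$2$2 = 0" using assms by simp
  ultimately have "of_real ((cmod (z$1$2))^2 + (cmod (z$2$2))^2) = (0::complex)" by metis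
  then have b: "(cmod (z$1$2))^2 + (cmod (z$2$2))^2 = 0" by (simp only: of_real_eq_0_iff)
  from a b show ?thesis by (simp add: M2_eq add_nonneg_eq_0_iff)
qed

lemma minproj_r1: assumes "r1 p" shows "minproj p"
proof -
  have mp: "mproj p" and n0: "p \<noteq> 0" using assms by (auto simp: r1_def)
  note pb = mproj_basic[OF mp]
  define c where "c = mat 1 - p"
  have rc: "r1 c" using r1_compl[OF assms] by (simp add: c_def)
  have hc: "madj c = c" using rc by (simp add: r1_def mproj_def)
  have "q = 0 \<or> q = p" if mq: "mproj q" and le: "mle q p" for q
  proof -
    note qb = mproj_basic[OF mq]
    define \<tau> where "\<tau> = Re (tr (c ** q))"
    have cqc: "c ** q ** c = \<tau> *\<^sub>R c" using r1_sandwich[OF rc qb(5)] by (simp add: \<tau>_def)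
    have "mpos (madj c ** (p - q) ** c)" using le mpos_conj by (simp add: mle_def)
    moreover have "madj c ** (p - q) ** c = B p 0 (- \<tau>)"
    proof -
      have cp: "c ** p = 0" using pb(3) by (simp add: c_def)
      have "madj c ** (p - q) ** c = c ** p ** c - c ** q ** c" by (simp add: hc mm_diff_left mm_diff_right)
      also have "\<dots> = - (\<tau> *\<^sub>R c)" by (simp add: cp cqc)
      also have "\<dots> = B p 0 (- \<tau>)" by (simp add: B_def c_def)
      finally show ?thesis .
    qed
    ultimately have t1: "0 \<le> - \<tau>" using mpos_B(2)[OF assms] by metis
    have "mpos q" using mpos_adjmult[of q] qb by simp
    then have "mpos (madj c ** q ** c)" by (rule mpos_conj)
    moreover have "madj c ** q ** c = B p 0 \<tau>" using cqc unfolding hc by (simp add: c_def B_def)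
    ultimately have t2: "0 \<le> \<tau>" using mpos_B(2)[OF assms] by metis
    have "\<tau> = 0" using t1 t2 by simp
    then have "c ** q ** c = 0" using cqc by simp
    then have "madj (q ** c) ** (q ** c) = 0"
      by (simp add: madj_mult hc qb(5) matrix_mul_assoc) (metis matrix_mul_assoc qb(1))
    then have "q ** c = 0" by (rule adj_zero)
    then have qp: "q ** p = q" by (simp add: c_def mm_diff_right)
    have "p ** q = madj (q ** p)" using qb(5) pb(5) by (simp add: madj_mult)
    also have "\<dots> = q" using qp qb(5) by simp
    finally have "q ** p = p ** q" using qp by simp
    then obtain u v where quv: "q = B p u v" using comm_B[OF assms qb(5)] by blast
    have "B p u 0 = B p u v ** p" using B_mult[OF mp, of u v 1 0] by (simp add: B_10)
    then have "B p u 0 = B p u v" using qp quv by simp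
    then have v0: "v = 0" using B_inj[OF assms] by simp
    have "B p (u * u) 0 = B p u 0" using qb(1) quv v0 by (simp add: B_mult[OF mp])
    then have "u * u = u" using B_inj[OF assms] by simp
    then have "u = 0 \<or> u = 1" by (metis mult_cancel_right2 mult_zero_left)
    then show ?thesis using quv v0 by (auto simp: B_00 B_10)
  qed
  then show ?thesis using mp n0 by (simp add: minproj_def)
qed




lemma B_1minus: "mat 1 - B q s t = B q (1 - s) (1 - t)" by (simp add: B_def algebra_simps)

lemma compat_real: assumes "0 \<le> (x::real)" "x \<le> 1" "0 \<le> y" "y \<le> 1" "\<bar>x - y\<bar> + \<bar>1 - x - y\<bar> = 1"
  shows "x = 0 \<or> x = 1 \<or> y = 0 \<or> y = 1"
  using assms by (cases "x \<le> y"; cases "x + y \<le> 1") (auto simp: abs_if split: if_splits)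

lemma br_a: assumes "r1 p" "a = B p \<alpha> \<beta>" "b = B p 1 0" "0 < \<alpha>" "\<alpha> < 1" "0 < \<beta>" "\<beta> < 1"
  shows "\<exists>\<alpha> \<beta> p. \<alpha> \<in> {0<..<1} \<and> \<beta> \<in> {0<..<1} \<and> minproj p \<and>
              b = p \<and> a = \<alpha> *\<^sub>R p + \<beta> *\<^sub>R (mat 1 - p)"
  apply (rule exI[of _ \<alpha>], rule exI[of _ \<beta>], rule exI[of _ p])
  using assms minproj_r1[OF assms(1)] by (simp add: B_def)

lemma br_b1: assumes "r1 p" "a = B p 1 0" "b = B p \<gamma> \<delta>" "0 \<le> \<gamma>" "\<gamma> \<le> 1" "0 \<le> \<delta>" "\<delta> \<le> 1" "\<gamma> + \<delta> > 0"
  shows "\<exists>\<alpha> \<beta> p. \<alpha> \<in> {0..1} \<and> \<beta> \<in> {0..1} \<and> \<alpha> + \<beta> > 0 \<and> minproj p \<and>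
                 a = p \<and> b = \<alpha> *\<^sub>R p + \<beta> *\<^sub>R (mat 1 - p)"
  apply (rule exI[of _ \<gamma>], rule exI[of _ \<delta>], rule exI[of _ p])
  using assms minproj_r1[OF assms(1)] by (simp add: B_def)

lemma br_b2: assumes "r1 p" "a = B p 1 \<alpha>" "b = B p \<gamma> \<delta>" "0 < \<alpha>" "\<alpha> < 1" "0 \<le> \<gamma>" "\<gamma> \<le> 1"
  "\<delta> = 0 \<or> \<delta> = 1" "\<delta> = 0 \<longrightarrow> \<gamma> \<noteq> 0"
  shows "\<exists>\<alpha> \<beta> p. \<alpha> \<in> {0..1} \<and> \<beta> \<in> {0..1} \<and> minproj p \<and>
                 ((a = p + \<alpha> *\<^sub>R (mat 1 - p) \<and> b = \<beta> *\<^sub>R p + (mat 1 - p) \<and> \<alpha> \<noteq> 0)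
                  \<or> (a = p + \<alpha> *\<^sub>R (mat 1 - p) \<and> b = \<beta> *\<^sub>R p \<and> \<alpha> \<noteq> 0 \<and> \<beta> \<noteq> 0))"
  apply (rule exI[of _ \<alpha>], rule exI[of _ \<gamma>], rule exI[of _ p])
  using assms minproj_r1[OF assms(1)] by (auto simp: B_def)

lemma br_b3: assumes "r1 p" "a = B p \<alpha> 0" "b = B p \<gamma> \<delta>" "0 < \<alpha>" "\<alpha> < 1" "0 \<le> \<delta>" "\<delta> \<le> 1"
  "\<gamma> = 0 \<or> \<gamma> = 1" "\<gamma> = 0 \<longrightarrow> \<delta> \<noteq> 0"
  shows "\<exists>\<alpha> \<beta> p. \<alpha> \<in> {0..1} \<and> \<beta> \<in> {0..1} \<and> minproj p \<and>
                 ((a = \<alpha> *\<^sub>R p \<and> b = p + \<beta> *\<^sub>R (mat 1 - p) \<and> \<alpha> \<noteq> 0)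
                  \<or> (a = \<alpha> *\<^sub>R p \<and> b = \<beta> *\<^sub>R (mat 1 - p) \<and> \<alpha> \<noteq> 0 \<and> \<beta> \<noteq> 0))"
  apply (rule exI[of _ \<alpha>], rule exI[of _ \<delta>], rule exI[of _ p])
  using assms minproj_r1[OF assms(1)] by (auto simp: B_def)




theorem proposition3p1:
  fixes a b :: M2
  assumes "mle 0 a" and "mle a (mat 1)" and "mle 0 b" and "mle b (mat 1)"
    and "a \<notin> {0, mat 1}" and "b \<notin> {0, mat 1}"
    and "abs_compatible a b" and "a ** b = b ** a"
  shows "(strict a \<longrightarrow>
           (\<exists>\<alpha> \<beta> p. \<alpha> \<in> {0<..<1} \<and> \<beta> \<in> {0<..<1} \<and> minproj p \<and>
              b = p \<and> a = \<alpha> *\<^sub>R p + \<beta> *\<^sub>R (mat 1 - p)))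
       \<and> (\<not> strict a \<longrightarrow>
           (eproj a = 0 \<longrightarrow>
              (\<exists>\<alpha> \<beta> p. \<alpha> \<in> {0..1} \<and> \<beta> \<in> {0..1} \<and> \<alpha> + \<beta> > 0 \<and> minproj p \<and>
                 a = p \<and> b = \<alpha> *\<^sub>R p + \<beta> *\<^sub>R (mat 1 - p)))
         \<and> (sproj a \<noteq> 0 \<and> eproj a \<noteq> 0 \<longrightarrow>
              (\<exists>\<alpha> \<beta> p. \<alpha> \<in> {0..1} \<and> \<beta> \<in> {0..1} \<and> minproj p \<and>
                 ((a = p + \<alpha> *\<^sub>R (mat 1 - p) \<and> b = \<beta> *\<^sub>R p + (mat 1 - p) \<and> \<alpha> \<noteq> 0)
                  \<or> (a = p + \<alpha> *\<^sub>R (mat 1 - p) \<and> b = \<beta> *\<^sub>R p \<and> \<alpha> \<noteq> 0 \<and> \<beta> \<noteq> 0))))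
         \<and> (nproj a \<noteq> 0 \<and> eproj a \<noteq> 0 \<longrightarrow>
              (\<exists>\<alpha> \<beta> p. \<alpha> \<in> {0..1} \<and> \<beta> \<in> {0..1} \<and> minproj p \<and>
                 ((a = \<alpha> *\<^sub>R p \<and> b = p + \<beta> *\<^sub>R (mat 1 - p) \<and> \<alpha> \<noteq> 0)
                  \<or> (a = \<alpha> *\<^sub>R p \<and> b = \<beta> *\<^sub>R (mat 1 - p) \<and> \<alpha> \<noteq> 0 \<and> \<beta> \<noteq> 0)))))"
proof -
  have pa: "mpos a" "mpos (mat 1 - a)" "mpos b" "mpos (mat 1 - b)"
    using assms(1-4) by (simp_all add: mle_def)
  have ha: "madj a = a" and hb: "madj b = b" using pa by (simp_all add: mpos_def)
  obtain q \<alpha> \<beta> \<gamma> \<delta> where q: "r1 q" and aq: "a = B q \<alpha> \<beta>" and bq: "b = B q \<gamma> \<delta>"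
    using joint[OF ha hb assms(8)] by blast
  have mp: "mproj q" using q by (simp add: r1_def)
  have rq': "r1 (mat 1 - q)" using r1_compl[OF q] .
  have aq': "a = B (mat 1 - q) \<beta> \<alpha>" and bq': "b = B (mat 1 - q) \<delta> \<gamma>" using aq bq by (simp_all add: B_swap)
  have r\<alpha>: "0 \<le> \<alpha>" "0 \<le> \<beta>" using mpos_B[OF q] pa(1) aq by auto
  have r\<alpha>2: "0 \<le> 1 - \<alpha>" "0 \<le> 1 - \<beta>" using mpos_B[OF q, of "1 - \<alpha>" "1 - \<beta>"] pa(2) aq by (auto simp: B_1minus)
  have r\<gamma>: "0 \<le> \<gamma>" "0 \<le> \<delta>" using mpos_B[OF q] pa(3) bq by auto
  have r\<gamma>2: "0 \<le> 1 - \<gamma>" "0 \<le> 1 - \<delta>" using mpos_B[OF q, of "1 - \<gamma>" "1 - \<delta>"] pa(4) bq by (auto simp: B_1minus)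
  have a0: "\<not> (\<alpha> = 0 \<and> \<beta> = 0)" and a1: "\<not> (\<alpha> = 1 \<and> \<beta> = 1)"
    using assms(5) aq by (auto simp: B_00 B_11)
  have b0: "\<not> (\<gamma> = 0 \<and> \<delta> = 0)" and b1: "\<not> (\<gamma> = 1 \<and> \<delta> = 1)"
    using assms(6) bq by (auto simp: B_00 B_11)
  have "mabs (a - b) + mabs (mat 1 - a - b) = mat 1" using assms(7) by (simp add: abs_compatible_def)
  moreover have "a - b = B q (\<alpha> - \<gamma>) (\<beta> - \<delta>)" by (simp add: aq bq B_diff)
  moreover have "mat 1 - a - b = B q (1 - \<alpha> - \<gamma>) (1 - \<beta> - \<delta>)" by (simp add: aq bq B_diff B_1minus)
  ultimately have "B q (\<bar>\<alpha> - \<gamma>\<bar> + \<bar>1 - \<alpha> - \<gamma>\<bar>) (\<bar>\<beta> - \<delta>\<bar> + \<bar>1 - \<beta> - \<delta>\<bar>) = B q 1 1"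
    by (simp add: mabs_B[OF q] B_add B_11)
  then have "\<bar>\<alpha> - \<gamma>\<bar> + \<bar>1 - \<alpha> - \<gamma>\<bar> = 1" "\<bar>\<beta> - \<delta>\<bar> + \<bar>1 - \<beta> - \<delta>\<bar> = 1"
    using B_inj[OF q] by auto
  then have c1: "\<alpha> = 0 \<or> \<alpha> = 1 \<or> \<gamma> = 0 \<or> \<gamma> = 1" and c2: "\<beta> = 0 \<or> \<beta> = 1 \<or> \<delta> = 0 \<or> \<delta> = 1"
    using compat_real r\<alpha> r\<alpha>2 r\<gamma> r\<gamma>2 by auto
  have sp: "sproj a = B q (if \<alpha> = 1 then 1 else 0) (if \<beta> = 1 then 1 else 0)"
  proof -
    have "sproj a = mat 1 - rproj (B q (1 - \<alpha>) (1 - \<beta>))" by (simp add: sproj_def aq B_1minus)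
    also have "\<dots> = B q (if \<alpha> = 1 then 1 else 0) (if \<beta> = 1 then 1 else 0)"
      by (simp add: rproj_B[OF q] B_1minus)
    finally show ?thesis .
  qed
  have np: "nproj a = B q (if \<alpha> = 0 then 1 else 0) (if \<beta> = 0 then 1 else 0)"
    by (simp add: nproj_def aq rproj_B[OF q] B_1minus)
  have ep: "eproj a = B q (\<alpha> - (if \<alpha> = 1 then 1 else 0)) (\<beta> - (if \<beta> = 1 then 1 else 0))"
    unfolding eproj_def sp by (subst (1) aq) (simp add: B_diff)
  have sp0: "sproj a = 0 \<longleftrightarrow> \<alpha> \<noteq> 1 \<and> \<beta> \<noteq> 1" unfolding sp B_00[symmetric, of q] B_inj[OF q] by auto
  have np0: "nproj a = 0 \<longleftrightarrow> \<alpha> \<noteq> 0 \<and> \<beta> \<noteq> 0" unfolding np B_00[symmetric, of q] B_inj[OF q] by auto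
  have ep0: "eproj a = 0 \<longleftrightarrow> (\<alpha> = 0 \<or> \<alpha> = 1) \<and> (\<beta> = 0 \<or> \<beta> = 1)"
    unfolding ep B_00[symmetric, of q] B_inj[OF q] by auto
  have st: "strict a \<longleftrightarrow> \<alpha> \<noteq> 0 \<and> \<alpha> \<noteq> 1 \<and> \<beta> \<noteq> 0 \<and> \<beta> \<noteq> 1"
    using assms(1,2,5) sp0 np0 by (auto simp: strict_def)
  show ?thesis
  proof (intro conjI impI)
    assume "strict a"
    then have s: "0 < \<alpha>" "\<alpha> < 1" "0 < \<beta>" "\<beta> < 1" using st r\<alpha> r\<alpha>2 by auto
    then have "\<gamma> = 0 \<or> \<gamma> = 1" "\<delta> = 0 \<or> \<delta> = 1" using c1 c2 by auto
    then have "(\<gamma> = 1 \<and> \<delta> = 0) \<or> (\<gamma> = 0 \<and> \<delta> = 1)" using b0 b1 by auto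
    then show "\<exists>\<alpha> \<beta> p. \<alpha> \<in> {0<..<1} \<and> \<beta> \<in> {0<..<1} \<and> minproj p \<and>
              b = p \<and> a = \<alpha> *\<^sub>R p + \<beta> *\<^sub>R (mat 1 - p)"
    proof
      assume "\<gamma> = 1 \<and> \<delta> = 0"
      then show ?thesis using br_a[OF q aq _ s] bq by simp
    next
      assume "\<gamma> = 0 \<and> \<delta> = 1"
      then show ?thesis using br_a[OF rq' aq' _ s(3,4,1,2)] bq' by simp
    qed
  next
    assume ns: "\<not> strict a" and e: "eproj a = 0"
    then have "(\<alpha> = 0 \<or> \<alpha> = 1) \<and> (\<beta> = 0 \<or> \<beta> = 1)" using ep0 by simp
    then have "(\<alpha> = 1 \<and> \<beta> = 0) \<or> (\<alpha> = 0 \<and> \<beta> = 1)" using a0 a1 by auto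
    moreover have "\<gamma> + \<delta> > 0" using b0 r\<gamma> by auto
    ultimately show "\<exists>\<alpha> \<beta> p. \<alpha> \<in> {0..1} \<and> \<beta> \<in> {0..1} \<and> \<alpha> + \<beta> > 0 \<and> minproj p \<and>
                 a = p \<and> b = \<alpha> *\<^sub>R p + \<beta> *\<^sub>R (mat 1 - p)"
    proof (elim disjE)
      assume "\<alpha> = 1 \<and> \<beta> = 0" "\<gamma> + \<delta> > 0"
      then show ?thesis using br_b1[OF q _ bq] aq r\<gamma> r\<gamma>2 by simp
    next
      assume "\<alpha> = 0 \<and> \<beta> = 1" "\<gamma> + \<delta> > 0"
      then show ?thesis using br_b1[OF rq' _ bq'] aq' r\<gamma> r\<gamma>2 by simp
    qed
  next
    assume ns: "\<not> strict a" and se: "sproj a \<noteq> 0 \<and> eproj a \<noteq> 0"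
    then have "\<alpha> = 1 \<or> \<beta> = 1" using sp0 by auto
    moreover have "\<not> ((\<alpha> = 0 \<or> \<alpha> = 1) \<and> (\<beta> = 0 \<or> \<beta> = 1))" using se ep0 by simp
    ultimately have "(\<alpha> = 1 \<and> 0 < \<beta> \<and> \<beta> < 1) \<or> (\<beta> = 1 \<and> 0 < \<alpha> \<and> \<alpha> < 1)"
      using a1 r\<alpha> r\<alpha>2 by auto
    then show "\<exists>\<alpha> \<beta> p. \<alpha> \<in> {0..1} \<and> \<beta> \<in> {0..1} \<and> minproj p \<and>
                 ((a = p + \<alpha> *\<^sub>R (mat 1 - p) \<and> b = \<beta> *\<^sub>R p + (mat 1 - p) \<and> \<alpha> \<noteq> 0)
                  \<or> (a = p + \<alpha> *\<^sub>R (mat 1 - p) \<and> b = \<beta> *\<^sub>R p \<and> \<alpha> \<noteq> 0 \<and> \<beta> \<noteq> 0))"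
    proof
      assume h: "\<alpha> = 1 \<and> 0 < \<beta> \<and> \<beta> < 1"
      then have "\<delta> = 0 \<or> \<delta> = 1" using c2 by auto
      moreover have "\<delta> = 0 \<longrightarrow> \<gamma> \<noteq> 0" using b0 by auto
      ultimately show ?thesis using br_b2[OF q _ bq] h aq r\<gamma> r\<gamma>2 by simp
    next
      assume h: "\<beta> = 1 \<and> 0 < \<alpha> \<and> \<alpha> < 1"
      then have "\<gamma> = 0 \<or> \<gamma> = 1" using c1 by auto
      moreover have "\<gamma> = 0 \<longrightarrow> \<delta> \<noteq> 0" using b0 by auto
      ultimately show ?thesis using br_b2[OF rq' _ bq'] h aq' r\<gamma> r\<gamma>2 by simp
    qed
  next
    assume ns: "\<not> strict a" and ne: "nproj a \<noteq> 0 \<and> eproj a \<noteq> 0"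
    then have "\<alpha> = 0 \<or> \<beta> = 0" using np0 by auto
    moreover have "\<not> ((\<alpha> = 0 \<or> \<alpha> = 1) \<and> (\<beta> = 0 \<or> \<beta> = 1))" using ne ep0 by simp
    ultimately have "(\<beta> = 0 \<and> 0 < \<alpha> \<and> \<alpha> < 1) \<or> (\<alpha> = 0 \<and> 0 < \<beta> \<and> \<beta> < 1)"
      using a0 r\<alpha> r\<alpha>2 by auto
    then show "\<exists>\<alpha> \<beta> p. \<alpha> \<in> {0..1} \<and> \<beta> \<in> {0..1} \<and> minproj p \<and>
                 ((a = \<alpha> *\<^sub>R p \<and> b = p + \<beta> *\<^sub>R (mat 1 - p) \<and> \<alpha> \<noteq> 0)
                  \<or> (a = \<alpha> *\<^sub>R p \<and> b = \<beta> *\<^sub>R (mat 1 - p) \<and> \<alpha> \<noteq> 0 \<and> \<beta> \<noteq> 0))"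
    proof
      assume h: "\<beta> = 0 \<and> 0 < \<alpha> \<and> \<alpha> < 1"
      then have "\<gamma> = 0 \<or> \<gamma> = 1" using c1 by auto
      moreover have "\<gamma> = 0 \<longrightarrow> \<delta> \<noteq> 0" using b0 by auto
      ultimately show ?thesis using br_b3[OF q _ bq] h aq r\<gamma> r\<gamma>2 by simp
    next
      assume h: "\<alpha> = 0 \<and> 0 < \<beta> \<and> \<beta> < 1"
      then have "\<delta> = 0 \<or> \<delta> = 1" using c2 by auto
      moreover have "\<delta> = 0 \<longrightarrow> \<gamma> \<noteq> 0" using b0 by auto
      ultimately show ?thesis using br_b3[OF rq' _ bq'] h aq' r\<gamma> r\<gamma>2 by simp
    qed
  qed
qed


end
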